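(* Let $k$ be a field of characteristic zero, $A_1=k[t,\partial]$ the first Weyl algebra ($\partial t-t\partial=1$), $Q_1$ its quotient division ring, and let $I$ be a non-zero right ideal of $A_1$. Then there exists an element $f\in I$, unique up to multiplication by an element of $k^*$, such that the set of elements of $I$ of minimal $t$-degree (together with $0$) is exactly $f\,k[\partial]$. Likewise, there exists an element $e^*\in I^*$, unique up to multiplication by an element of $k^*$, such that the set of elements of $I^*$ of minimal $t$-degree (together with $0$) is exactly $k[\partial]\,e^*$.
   Context: $I^*$ denotes the dual of $I$ as a left $A_1$-module, identified with $\{u\in Q_1: uI\subseteq A_1\}$. The $t$-degree $\deg_t$ is the degree in $t$ coming from the inclusion $A_1\subset k(\partial)[t]$, extended to $Q_1$ (the quotient division ring of $k(\partial)[t]$) by $\deg_t(ab^{-1})=\deg_t a-\deg_t b$. *)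

theory Defs
  imports Main
begin

text \<open>K is a central subfield of characteristic zero, and t, d (for the derivation
  symbol) satisfy d t - t d = 1.  Since the Weyl algebra is simple in
  characteristic zero, the K-subalgebra generated by t and d is a copy of A_1,
  and its division closure is a copy of the quotient division ring Q_1.\<close>

inductive_set ring_cl :: "'a::ring_1 set \<Rightarrow> 'a set" for S where
  rc_base: "x \<in> S \<Longrightarrow> x \<in> ring_cl S"
| rc_one: "1 \<in> ring_cl S"
| rc_add: "x \<in> ring_cl S \<Longrightarrow> y \<in> ring_cl S \<Longrightarrow> x + y \<in> ring_cl S"
| rc_neg: "x \<in> ring_cl S \<Longrightarrow> - x \<in> ring_cl S"
| rc_mult: "x \<in> ring_cl S \<Longrightarrow> y \<in> ring_cl S \<Longrightarrow> x * y \<in> ring_cl S"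

inductive_set div_cl :: "'a::division_ring set \<Rightarrow> 'a set" for S where
  dc_base: "x \<in> S \<Longrightarrow> x \<in> div_cl S"
| dc_one: "1 \<in> div_cl S"
| dc_add: "x \<in> div_cl S \<Longrightarrow> y \<in> div_cl S \<Longrightarrow> x + y \<in> div_cl S"
| dc_neg: "x \<in> div_cl S \<Longrightarrow> - x \<in> div_cl S"
| dc_mult: "x \<in> div_cl S \<Longrightarrow> y \<in> div_cl S \<Longrightarrow> x * y \<in> div_cl S"
| dc_inv: "x \<in> div_cl S \<Longrightarrow> inverse x \<in> div_cl S"

definition central_subfield :: "'a::division_ring set \<Rightarrow> bool" where
  "central_subfield K \<longleftrightarrow> 0 \<in> K \<and> 1 \<in> K \<and>
     (\<forall>x\<in>K. \<forall>y\<in>K. x + y \<in> K \<and> x * y \<in> K) \<and>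
     (\<forall>x\<in>K. - x \<in> K \<and> inverse x \<in> K) \<and>
     (\<forall>c\<in>K. \<forall>x. c * x = x * c)"

definition Weyl :: "'a::division_ring set \<Rightarrow> 'a \<Rightarrow> 'a \<Rightarrow> 'a set" where
  "Weyl K t d = ring_cl (K \<union> {t, d})"

definition Kpoly_d :: "'a::division_ring set \<Rightarrow> 'a \<Rightarrow> 'a set" where
  "Kpoly_d K d = ring_cl (K \<union> {d})"

definition Kfrac_d :: "'a::division_ring set \<Rightarrow> 'a \<Rightarrow> 'a set" where
  "Kfrac_d K d = div_cl (K \<union> {d})"

definition Kfrac_d_t :: "'a::division_ring set \<Rightarrow> 'a \<Rightarrow> 'a \<Rightarrow> 'a set" where
  "Kfrac_d_t K t d = ring_cl (Kfrac_d K d \<union> {t})"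

definition Quot1 :: "'a::division_ring set \<Rightarrow> 'a \<Rightarrow> 'a \<Rightarrow> 'a set" where
  "Quot1 K t d = div_cl (Weyl K t d)"

definition deg_t_poly :: "'a::division_ring set \<Rightarrow> 'a \<Rightarrow> 'a \<Rightarrow> 'a \<Rightarrow> nat" where
  "deg_t_poly K t d a = (LEAST n. \<exists>c. (\<forall>i\<le>n. c i \<in> Kfrac_d K d) \<and>
                                     a = (\<Sum>i\<le>n. c i * t ^ i))"

definition deg_t :: "'a::division_ring set \<Rightarrow> 'a \<Rightarrow> 'a \<Rightarrow> 'a \<Rightarrow> int" where
  "deg_t K t d q = (THE m. \<exists>a b. a \<in> Kfrac_d_t K t d \<and> b \<in> Kfrac_d_t K t d \<and> b \<noteq> 0 \<and>
       q = a * inverse b \<and> m = int (deg_t_poly K t d a) - int (deg_t_poly K t d b))"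

definition right_ideal :: "'a::ring_1 set \<Rightarrow> 'a set \<Rightarrow> bool" where
  "right_ideal A I \<longleftrightarrow> I \<subseteq> A \<and> 0 \<in> I \<and> (\<forall>x\<in>I. \<forall>y\<in>I. x + y \<in> I) \<and>
     (\<forall>x\<in>I. \<forall>a\<in>A. x * a \<in> I)"

definition dual_ideal :: "'a::division_ring set \<Rightarrow> 'a \<Rightarrow> 'a \<Rightarrow> 'a set \<Rightarrow> 'a set" where
  "dual_ideal K t d I = {u \<in> Quot1 K t d. \<forall>x\<in>I. u * x \<in> Weyl K t d}"

definition min_deg_part :: "'a::division_ring set \<Rightarrow> 'a \<Rightarrow> 'a \<Rightarrow> 'a set \<Rightarrow> 'a set" where
  "min_deg_part K t d S = {x \<in> S. x \<noteq> 0 \<and> (\<forall>y\<in>S. y \<noteq> 0 \<longrightarrow> deg_t K t d x \<le> deg_t K t d y)} \<union> {0}"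

end

theory Submission
  imports Defs
begin

lemma comm_div_cl:
  assumes "\<forall>x\<in>S. x * z = z * (x::'a::division_ring)"
  shows "x \<in> div_cl S \<Longrightarrow> x * z = z * x"
proof (induction x rule: div_cl.induct)
  case (dc_base x) then show ?case using assms by auto
next
  case dc_one then show ?case by simp
next
  case (dc_add x y) then show ?case by (simp add: distrib_left distrib_right)
next
  case (dc_neg x) then show ?case by simp
next
  case (dc_mult x y) then show ?case by (metis mult.assoc)
next
  case (dc_inv x)
  show ?case
  proof (cases "x = 0")
    case True then show ?thesis by simp
  next
    case False
    have "inverse x * z = inverse x * (z * x) * inverse x" using False
      by (simp add: mult.assoc)
    also have "\<dots> = inverse x * (x * z) * inverse x" using dc_inv by simp
    also have "\<dots> = z * inverse x" using False by (simp add: mult.assoc[symmetric])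
    finally show ?thesis .
  qed
qed

lemma comm_div_cl2:
  assumes "\<forall>x\<in>S. \<forall>y\<in>S. x * y = y * (x::'a::division_ring)"
  shows "x \<in> div_cl S \<Longrightarrow> y \<in> div_cl S \<Longrightarrow> x * y = y * x"
proof -
  assume x: "x \<in> div_cl S" and y: "y \<in> div_cl S"
  have "\<forall>s\<in>S. s * y = y * s"
  proof
    fix s assume "s \<in> S"
    then have "\<forall>x\<in>S. x * s = s * x" using assms by metis
    from comm_div_cl[OF this y] show "s * y = y * s" by simp
  qed
  from comm_div_cl[OF this x] show ?thesis .
qed

lemma ring_cl_sub_div_cl: "x \<in> ring_cl S \<Longrightarrow> x \<in> div_cl S"
  by (induction x rule: ring_cl.induct) (auto intro: div_cl.intros)

lemma ring_cl_mono: assumes "S \<subseteq> T" shows "x \<in> ring_cl S \<Longrightarrow> x \<in> ring_cl T"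
  apply (induction x rule: ring_cl.induct) using assms by (auto intro: ring_cl.intros)

lemma div_cl_mono: assumes "S \<subseteq> T" shows "x \<in> div_cl S \<Longrightarrow> x \<in> div_cl T"
  apply (induction x rule: div_cl.induct) using assms by (auto intro: div_cl.intros)

lemma ring_cl_zero: "0 \<in> ring_cl S"
  by (metis rc_add rc_neg rc_one add.right_inverse)

lemma ring_cl_diff: "x \<in> ring_cl S \<Longrightarrow> y \<in> ring_cl S \<Longrightarrow> x - y \<in> ring_cl S"
  by (metis rc_add rc_neg diff_conv_add_uminus)

lemma ring_cl_power: "x \<in> ring_cl S \<Longrightarrow> x ^ n \<in> ring_cl S"
  by (induction n) (auto intro: ring_cl.intros)

definition lrep :: "'a::division_ring set \<Rightarrow> 'a \<Rightarrow> 'a \<Rightarrow> (nat \<Rightarrow> 'a) \<Rightarrow> nat \<Rightarrow> bool" where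
  "lrep C y a c N \<longleftrightarrow> (\<forall>i. c i \<in> C) \<and> (\<forall>i>N. c i = 0) \<and> a = (\<Sum>i\<le>N. c i * y ^ i)"

definition hasrep :: "'a::division_ring set \<Rightarrow> 'a \<Rightarrow> 'a \<Rightarrow> (nat \<Rightarrow> 'a) \<Rightarrow> nat \<Rightarrow> bool" where
  "hasrep C y a c N \<longleftrightarrow> lrep C y a c N \<and> c N \<noteq> 0"

definition gdeg :: "'a::division_ring set \<Rightarrow> 'a \<Rightarrow> 'a \<Rightarrow> nat" where
  "gdeg C y a = (LEAST n. \<exists>c. (\<forall>i\<le>n. c i \<in> C) \<and> a = (\<Sum>i\<le>n. c i * y ^ i))"

lemma lrep_C_mono: "C \<subseteq> C' \<Longrightarrow> lrep C y a c N \<Longrightarrow> lrep C' y a c N"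
  unfolding lrep_def by auto

lemma lrep_mono:
  assumes "lrep C y a c N" "N \<le> N'" shows "lrep C y a c N'"
proof -
  have "(\<Sum>i\<le>N'. c i * y ^ i) = (\<Sum>i\<le>N. c i * y ^ i)"
    using assms unfolding lrep_def
    by (intro sum.mono_neutral_right) auto
  then show ?thesis using assms unfolding lrep_def by auto
qed

locale skew =
  fixes C :: "'a::division_ring set" and y z s :: 'a
  assumes C0: "0 \<in> C" and C1: "1 \<in> C"
    and Cadd: "a \<in> C \<Longrightarrow> b \<in> C \<Longrightarrow> a + b \<in> C"
    and Cneg: "a \<in> C \<Longrightarrow> - a \<in> C"
    and Cmul: "a \<in> C \<Longrightarrow> b \<in> C \<Longrightarrow> a * b \<in> C"
    and Cdelta: "a \<in> C \<Longrightarrow> y * a - a * y \<in> C"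
    and yz: "y * z - z * y = s"
    and s1: "s = 1 \<or> s = -1"
    and char0: "\<forall>n::nat. n > 0 \<longrightarrow> (of_nat n :: 'a) \<noteq> 0"
    and Cz: "a \<in> C \<Longrightarrow> a * z = z * a"
begin

lemma s_comm: "s * x = x * s"
  using s1 by auto

lemma s_nz: "s \<noteq> 0" using s1 by auto

lemma pow_comm: "y ^ Suc i * z - z * y ^ Suc i = of_nat (Suc i) * s * y ^ i"
proof (induction i)
  case 0 then show ?case using yz by simp
next
  case (Suc i)
  have "y ^ Suc (Suc i) * z - z * y ^ Suc (Suc i)
        = y * (y ^ Suc i * z - z * y ^ Suc i) + (y * z - z * y) * y ^ Suc i"
    by (simp add: algebra_simps)
  also have "\<dots> = y * (of_nat (Suc i) * s * y ^ i) + s * y ^ Suc i"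
    using Suc yz by simp
  also have "\<dots> = of_nat (Suc i) * s * y ^ Suc i + s * y ^ Suc i"
    by (metis mult.assoc mult_of_nat_commute s_comm power_Suc)
  also have "\<dots> = of_nat (Suc (Suc i)) * s * y ^ Suc i"
    by (simp only: of_nat_Suc[of "Suc i"] distrib_right mult_1_left add.commute)
  finally show ?case .
qed


lemma comm_z_ofnat: "(of_nat k * s) * z = z * (of_nat k * s)"
  using s1 by (auto simp: mult_of_nat_commute)

lemma indep:
  "(\<forall>i\<le>n. c i * z = z * c i) \<Longrightarrow> (\<Sum>i\<le>n. c i * y ^ i) = 0 \<Longrightarrow> \<forall>i\<le>n. c i = 0"
proof (induction n arbitrary: c)
  case 0 then show ?case by simp
next
  case (Suc n)
  let ?X = "\<Sum>i\<le>Suc n. c i * y ^ i"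
  have "?X * z - z * ?X = (\<Sum>i\<le>Suc n. c i * y ^ i * z - z * (c i * y ^ i))"
    by (simp only: sum_distrib_right sum_distrib_left sum_subtractf)
  also have "\<dots> = (\<Sum>i\<le>Suc n. c i * (y ^ i * z - z * y ^ i))"
  proof (rule sum.cong)
    fix i assume "i \<in> {..Suc n}"
    then have "c i * z = z * c i" using Suc.prems by auto
    then have "z * (c i * y ^ i) = c i * (z * y ^ i)" by (metis mult.assoc)
    then show "c i * y ^ i * z - z * (c i * y ^ i) = c i * (y ^ i * z - z * y ^ i)"
      by (simp add: right_diff_distrib mult.assoc)
  qed simp
  also have "\<dots> = (\<Sum>j\<le>n. c (Suc j) * (y ^ Suc j * z - z * y ^ Suc j))"
    by (subst sum.atMost_Suc_shift) simp
  also have "\<dots> = (\<Sum>j\<le>n. (c (Suc j) * (of_nat (Suc j) * s)) * y ^ j)"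
    using pow_comm by (simp add: mult.assoc)
  finally have eq: "?X * z - z * ?X = (\<Sum>j\<le>n. (c (Suc j) * (of_nat (Suc j) * s)) * y ^ j)" .
  have "(\<Sum>j\<le>n. (c (Suc j) * (of_nat (Suc j) * s)) * y ^ j) = 0"
    using eq Suc.prems by simp
  moreover have "\<forall>j\<le>n. (c (Suc j) * (of_nat (Suc j) * s)) * z = z * (c (Suc j) * (of_nat (Suc j) * s))"
  proof (intro allI impI)
    fix j assume "j \<le> n"
    then have h: "c (Suc j) * z = z * c (Suc j)" using Suc.prems by auto
    have "(c (Suc j) * (of_nat (Suc j) * s)) * z = c (Suc j) * ((of_nat (Suc j) * s) * z)"
      by (simp add: mult.assoc)
    also have "\<dots> = c (Suc j) * z * (of_nat (Suc j) * s)"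
      by (metis comm_z_ofnat mult.assoc)
    also have "\<dots> = z * (c (Suc j) * (of_nat (Suc j) * s))" using h by (simp add: mult.assoc)
    finally show "(c (Suc j) * (of_nat (Suc j) * s)) * z = z * (c (Suc j) * (of_nat (Suc j) * s))" .
  qed
  ultimately have z1: "\<forall>j\<le>n. c (Suc j) * (of_nat (Suc j) * s) = 0"
    using Suc.IH[of "\<lambda>j. c (Suc j) * (of_nat (Suc j) * s)"] by blast
  have z2: "\<forall>j\<le>n. c (Suc j) = 0"
  proof (intro allI impI)
    fix j assume "j \<le> n"
    then have "c (Suc j) * (of_nat (Suc j) * s) = 0" using z1 by auto
    moreover have "(of_nat (Suc j) :: 'a) \<noteq> 0" using char0 by blast
    ultimately show "c (Suc j) = 0" using s_nz by auto
  qed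
  have "?X = c 0 + (\<Sum>j\<le>n. c (Suc j) * y ^ Suc j)"
    by (subst sum.atMost_Suc_shift) simp
  then have "c 0 = 0" using z2 Suc.prems by simp
  then show ?case using z2 by (metis Suc_le_mono not0_implies_Suc)
qed

lemma lrep_unique:
  assumes "lrep C y a c N" "lrep C y a c' N'" shows "c = c'"
proof -
  let ?M = "max N N'"
  have a1: "lrep C y a c ?M" "lrep C y a c' ?M"
    using lrep_mono[OF assms(1), of ?M] lrep_mono[OF assms(2), of ?M] by auto
  have "(\<Sum>i\<le>?M. (c i - c' i) * y ^ i) = 0"
    using a1 unfolding lrep_def by (simp add: left_diff_distrib sum_subtractf)
  moreover have "\<forall>i\<le>?M. (c i - c' i) * z = z * (c i - c' i)"
  proof (intro allI impI)
    fix i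
    have "c i \<in> C" "c' i \<in> C" using a1 unfolding lrep_def by auto
    then show "(c i - c' i) * z = z * (c i - c' i)"
      by (simp add: left_diff_distrib right_diff_distrib Cz)
  qed
  ultimately have h: "\<forall>i\<le>?M. c i - c' i = 0" using indep[of ?M "\<lambda>i. c i - c' i"] by blast
  show ?thesis
  proof (rule ext)
    fix i show "c i = c' i"
    proof (cases "i \<le> ?M")
      case True then show ?thesis using h by simp
    next
      case False
      then have "N < i" "N' < i" by auto
      then show ?thesis using assms unfolding lrep_def by simp
    qed
  qed
qed

lemma gdeg_hasrep:
  assumes "hasrep C y a c n" shows "gdeg C y a = n"
  unfolding gdeg_def
proof (rule Least_equality)
  show "\<exists>c. (\<forall>i\<le>n. c i \<in> C) \<and> a = (\<Sum>i\<le>n. c i * y ^ i)"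
    using assms unfolding hasrep_def lrep_def by (intro exI[of _ c]) auto
next
  fix m assume "\<exists>c. (\<forall>i\<le>m. c i \<in> C) \<and> a = (\<Sum>i\<le>m. c i * y ^ i)"
  then obtain c' where c': "\<forall>i\<le>m. c' i \<in> C" "a = (\<Sum>i\<le>m. c' i * y ^ i)" by blast
  show "n \<le> m"
  proof (rule ccontr)
    assume "\<not> n \<le> m"
    define c'' where "c'' i = (if i \<le> m then c' i else 0)" for i
    have "lrep C y a c'' m" unfolding lrep_def c''_def using c' C0 by auto
    then have "c = c''" using assms lrep_unique unfolding hasrep_def by blast
    then show False using assms \<open>\<not> n \<le> m\<close> unfolding hasrep_def c''_def by auto
  qed
qed

lemma gdeg_0: "gdeg C y 0 = 0"
  unfolding gdeg_def by (rule Least_eq_0) (rule exI[of _ "\<lambda>_. 0"], simp add: C0)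

lemma lrep_hasrep: "lrep C y a c N \<Longrightarrow> a \<noteq> 0 \<Longrightarrow> \<exists>n\<le>N. hasrep C y a c n"
proof (induction N)
  case 0 then show ?case unfolding hasrep_def lrep_def by auto
next
  case (Suc N)
  show ?case
  proof (cases "c (Suc N) = 0")
    case False then show ?thesis using Suc.prems unfolding hasrep_def by auto
  next
    case True
    have "\<forall>i>N. c i = 0" using Suc.prems True unfolding lrep_def
      by (metis Suc_lessI)
    then have "lrep C y a c N" using Suc.prems True unfolding lrep_def
      by auto
    then show ?thesis using Suc.IH Suc.prems by (meson le_Suc_eq)
  qed
qed

lemma lrep_zero: "lrep C y 0 c N \<Longrightarrow> c i = 0"
proof -
  assume "lrep C y 0 c N"
  moreover have "lrep C y 0 (\<lambda>_. 0) 0" unfolding lrep_def using C0 by simp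
  ultimately show ?thesis using lrep_unique by metis
qed

lemma lrep_0: "lrep C y 0 (\<lambda>_. 0) N"
  unfolding lrep_def using C0 by simp

lemma lrep_monom: "e \<in> C \<Longrightarrow> lrep C y (e * y ^ k) (\<lambda>i. if i = k then e else 0) k"
  unfolding lrep_def using C0
  by (simp add: if_distrib[of "\<lambda>x. x * _"] sum.delta cong: if_cong)

lemma lrep_const: "e \<in> C \<Longrightarrow> lrep C y e (\<lambda>i. if i = 0 then e else 0) 0"
  using lrep_monom[of e 0] by simp

lemma lrep_add: "lrep C y a c N \<Longrightarrow> lrep C y b e N \<Longrightarrow> lrep C y (a + b) (\<lambda>i. c i + e i) N"
  unfolding lrep_def by (simp add: Cadd distrib_right sum.distrib)

lemma lrep_neg: "lrep C y a c N \<Longrightarrow> lrep C y (- a) (\<lambda>i. - c i) N"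
  unfolding lrep_def by (simp add: Cneg sum_negf)

lemma lrep_lmul: "e \<in> C \<Longrightarrow> lrep C y a c N \<Longrightarrow> lrep C y (e * a) (\<lambda>i. e * c i) N"
  unfolding lrep_def by (simp add: Cmul sum_distrib_left mult.assoc)

lemma lrep_ymul:
  assumes "lrep C y a c N"
  shows "lrep C y (y * a) (\<lambda>i. (if i = 0 then 0 else c (i - 1)) + (y * c i - c i * y)) (Suc N)"
proof -
  have cC: "\<forall>i. c i \<in> C" and cz: "\<forall>i>N. c i = 0" and a: "a = (\<Sum>i\<le>N. c i * y ^ i)"
    using assms unfolding lrep_def by auto
  have "y * a = (\<Sum>i\<le>N. y * c i * y ^ i)" using a by (simp add: sum_distrib_left mult.assoc)
  also have "\<dots> = (\<Sum>i\<le>N. c i * y ^ Suc i + (y * c i - c i * y) * y ^ i)"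
    by (intro sum.cong) (simp_all add: algebra_simps mult.assoc)
  also have "\<dots> = (\<Sum>i\<le>N. c i * y ^ Suc i) + (\<Sum>i\<le>N. (y * c i - c i * y) * y ^ i)"
    by (simp add: sum.distrib)
  also have "(\<Sum>i\<le>N. c i * y ^ Suc i) = (\<Sum>i\<le>Suc N. (if i = 0 then 0 else c (i - 1)) * y ^ i)"
    by (subst sum.atMost_Suc_shift) simp
  also have "(\<Sum>i\<le>N. (y * c i - c i * y) * y ^ i) = (\<Sum>i\<le>Suc N. (y * c i - c i * y) * y ^ i)"
    using cz by simp
  finally have "y * a = (\<Sum>i\<le>Suc N. ((if i = 0 then 0 else c (i - 1)) + (y * c i - c i * y)) * y ^ i)"
    by (simp add: sum.distrib distrib_right)
  moreover have "\<forall>i. (if i = 0 then 0 else c (i - 1)) + (y * c i - c i * y) \<in> C"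
    using cC C0 Cdelta Cadd by auto
  moreover have "\<forall>i>Suc N. (if i = 0 then 0 else c (i - 1)) + (y * c i - c i * y) = 0"
    using cz by auto
  ultimately show ?thesis unfolding lrep_def by blast
qed

lemma lrep_sum:
  assumes "finite A" "\<forall>j\<in>A. lrep C y (f j) (g j) N"
  shows "lrep C y (\<Sum>j\<in>A. f j) (\<lambda>i. \<Sum>j\<in>A. g j i) N"
  using assms
proof (induction A rule: finite_induct)
  case empty then show ?case using lrep_0 by simp
next
  case (insert x F)
  then have "lrep C y (f x + (\<Sum>j\<in>F. f j)) (\<lambda>i. g x i + (\<Sum>j\<in>F. g j i)) N"
    by (intro lrep_add) auto
  then show ?case using insert by simp
qed

lemma ring_cl_mult_lrep:
  assumes "S \<subseteq> C \<union> {y}"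
  shows "x \<in> ring_cl S \<Longrightarrow> \<forall>b c N. lrep C y b c N \<longrightarrow> (\<exists>c' N'. lrep C y (x * b) c' N')"
proof (induction x rule: ring_cl.induct)
  case (rc_base x)
  then show ?case using assms lrep_lmul lrep_ymul by blast
next
  case rc_one then show ?case by auto
next
  case (rc_add x1 x2)
  show ?case
  proof (intro allI impI)
    fix b c N assume "lrep C y b c N"
    then obtain c1 N1 c2 N2 where "lrep C y (x1 * b) c1 N1" "lrep C y (x2 * b) c2 N2"
      using rc_add.IH by blast
    then have "lrep C y (x1 * b) c1 (max N1 N2)" "lrep C y (x2 * b) c2 (max N1 N2)"
      using lrep_mono[of C y "x1 * b" c1 N1 "max N1 N2"] lrep_mono[of C y "x2 * b" c2 N2 "max N1 N2"]
      by auto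
    then show "\<exists>c' N'. lrep C y ((x1 + x2) * b) c' N'"
      using lrep_add by (metis distrib_right)
  qed
next
  case (rc_neg x)
  then show ?case using lrep_neg by (metis minus_mult_left)
next
  case (rc_mult x1 x2)
  then show ?case by (metis mult.assoc)
qed

lemma ring_cl_lrep:
  assumes "S \<subseteq> C \<union> {y}" "x \<in> ring_cl S" shows "\<exists>c N. lrep C y x c N"
  using ring_cl_mult_lrep[OF assms] lrep_const[OF C1] by (metis mult.right_neutral)

lemma ypow_lrep: "lrep C y b e m \<Longrightarrow> \<exists>h. lrep C y (y ^ i * b) h (m + i) \<and> h (m + i) = e m"
proof (induction i)
  case 0 then show ?case by auto
next
  case (Suc i)
  then obtain h where h: "lrep C y (y ^ i * b) h (m + i)" "h (m + i) = e m" by auto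
  have "h (Suc (m + i)) = 0" using h unfolding lrep_def by auto
  then show ?case using lrep_ymul[OF h(1)] h(2) by (auto simp: mult.assoc)
qed

lemma hasrep_mult:
  assumes a: "hasrep C y a c n" and b: "hasrep C y b e m"
  shows "\<exists>g. hasrep C y (a * b) g (n + m) \<and> g (n + m) = c n * e m"
proof -
  have "\<forall>i. \<exists>h. lrep C y (y ^ i * b) h (m + i) \<and> h (m + i) = e m"
    using b ypow_lrep unfolding hasrep_def by blast
  then obtain h where h: "\<And>i. lrep C y (y ^ i * b) (h i) (m + i) \<and> h i (m + i) = e m"
    by metis
  have cC: "\<forall>i. c i \<in> C" using a unfolding hasrep_def lrep_def by auto
  have l: "\<forall>i\<in>{..n}. lrep C y (c i * (y ^ i * b)) (\<lambda>j. c i * h i j) (n + m)"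
  proof
    fix i assume "i \<in> {..n}"
    have "lrep C y (c i * (y ^ i * b)) (\<lambda>j. c i * h i j) (m + i)"
      using lrep_lmul[of "c i" "y ^ i * b" "h i" "m + i"] h cC by auto
    then show "lrep C y (c i * (y ^ i * b)) (\<lambda>j. c i * h i j) (n + m)"
      using lrep_mono \<open>i \<in> {..n}\<close> by fastforce
  qed
  have ab: "a * b = (\<Sum>i\<le>n. c i * (y ^ i * b))"
    using a unfolding hasrep_def lrep_def by (simp add: sum_distrib_right mult.assoc)
  have L: "lrep C y (a * b) (\<lambda>j. \<Sum>i\<le>n. c i * h i j) (n + m)"
    using lrep_sum[OF _ l] ab by simp
  have "(\<Sum>i\<le>n. c i * h i (n + m)) = c n * e m"
  proof -
    have "(\<Sum>i\<le>n. c i * h i (n + m)) = (\<Sum>i\<le>n. if i = n then c n * e m else 0)"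
    proof (rule sum.cong)
      fix i assume "i \<in> {..n}"
      show "c i * h i (n + m) = (if i = n then c n * e m else 0)"
      proof (cases "i = n")
        case True then show ?thesis using h[of n] by (simp add: add.commute)
      next
        case False then have "i < n" using \<open>i \<in> {..n}\<close> by auto
        then have "h i (n + m) = 0" using h[of i] unfolding lrep_def by auto
        then show ?thesis using False by simp
      qed
    qed simp
    then show ?thesis by simp
  qed
  moreover have "c n * e m \<noteq> 0" using a b unfolding hasrep_def by simp
  ultimately show ?thesis using L unfolding hasrep_def by auto
qed


lemma Rg_hasrep: "x \<in> ring_cl (C \<union> {y}) \<Longrightarrow> x \<noteq> 0 \<Longrightarrow> \<exists>c n. hasrep C y x c n"
  using ring_cl_lrep[of "C \<union> {y}" x] lrep_hasrep by blast

lemma hasrep_const: "e \<in> C \<Longrightarrow> e \<noteq> 0 \<Longrightarrow> hasrep C y e (\<lambda>i. if i = 0 then e else 0) 0"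
  using lrep_const unfolding hasrep_def by simp

lemma deg_mult:
  assumes "a \<in> ring_cl (C \<union> {y})" "b \<in> ring_cl (C \<union> {y})" "a \<noteq> 0" "b \<noteq> 0"
  shows "gdeg C y (a * b) = gdeg C y a + gdeg C y b"
proof -
  obtain c n e m where "hasrep C y a c n" "hasrep C y b e m" using assms Rg_hasrep by metis
  then show ?thesis using hasrep_mult gdeg_hasrep by metis
qed

lemma sub_same:
  assumes "hasrep C y a c n" "hasrep C y b e n" "c n = e n"
  shows "a - b = 0 \<or> gdeg C y (a - b) < n"
proof (cases "a - b = 0")
  case False
  have "lrep C y (a + - b) (\<lambda>i. c i + - e i) n"
    using assms unfolding hasrep_def by (intro lrep_add lrep_neg) auto
  then obtain n' where "n' \<le> n" "hasrep C y (a - b) (\<lambda>i. c i + - e i) n'"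
    using False lrep_hasrep by fastforce
  moreover then have "n' \<noteq> n" using assms unfolding hasrep_def by auto
  ultimately show ?thesis using gdeg_hasrep by fastforce
qed simp

lemma add_same:
  assumes "hasrep C y a c n" "hasrep C y b e n"
  shows "(c n + e n = 0 \<and> (a + b = 0 \<or> gdeg C y (a + b) < n)) \<or> hasrep C y (a + b) (\<lambda>i. c i + e i) n"
proof -
  have l: "lrep C y (a + b) (\<lambda>i. c i + e i) n"
    using assms unfolding hasrep_def by (intro lrep_add) auto
  show ?thesis
  proof (cases "a + b = 0")
    case True
    then show ?thesis using l lrep_zero by metis
  next
    case False
    then obtain n' where "n' \<le> n" "hasrep C y (a + b) (\<lambda>i. c i + e i) n'"
      using l lrep_hasrep by blast
    then show ?thesis using gdeg_hasrep l unfolding hasrep_def lrep_def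
      by (metis le_neq_implies_less)
  qed
qed

lemma units_C:
  assumes "p \<in> ring_cl (C \<union> {y})" "q \<in> ring_cl (C \<union> {y})" "p * q = 1"
  shows "p \<in> C"
proof -
  have nz: "p \<noteq> 0" "q \<noteq> 0" using assms by auto
  obtain c n e m where h: "hasrep C y p c n" "hasrep C y q e m" using assms nz Rg_hasrep by metis
  have "gdeg C y 1 = 0" using gdeg_hasrep[OF hasrep_const[OF C1]] by simp
  then have "n + m = 0" using hasrep_mult[OF h] gdeg_hasrep assms(3) by metis
  then have "n = 0" by simp
  then have "p = c 0" using h unfolding hasrep_def lrep_def by simp
  then show ?thesis using h unfolding hasrep_def lrep_def by simp
qed

end

locale skewf = skew +
  assumes Cinv: "a \<in> C \<Longrightarrow> inverse a \<in> C"
begin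

abbreviation "Rg \<equiv> ring_cl (C \<union> {y})"

lemma divalg:
  assumes b: "b \<in> Rg" "b \<noteq> 0"
  shows "a \<in> Rg \<Longrightarrow> \<exists>q\<in>Rg. \<exists>r\<in>Rg. a = b * q + r \<and> (r = 0 \<or> gdeg C y r < gdeg C y b)"
proof (induction "gdeg C y a" arbitrary: a rule: less_induct)
  case less
  show ?case
  proof (cases "a = 0 \<or> gdeg C y a < gdeg C y b")
    case True
    then show ?thesis using less.prems ring_cl_zero[of "C \<union> {y}"] by force
  next
    case False
    then have a0: "a \<noteq> 0" and le: "gdeg C y b \<le> gdeg C y a" by auto
    obtain c n where hc: "hasrep C y a c n" using Rg_hasrep less.prems a0 by blast
    obtain e m where he: "hasrep C y b e m" using Rg_hasrep b by blast
    have dn: "gdeg C y a = n" and dm: "gdeg C y b = m" using hc he gdeg_hasrep by auto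
    have cn: "c n \<in> C" "c n \<noteq> 0" and em: "e m \<in> C" "e m \<noteq> 0"
      using hc he unfolding hasrep_def lrep_def by auto
    define \<gamma> where "\<gamma> = inverse (e m) * c n"
    have \<gamma>C: "\<gamma> \<in> C" "\<gamma> \<noteq> 0" using cn em Cinv Cmul unfolding \<gamma>_def by auto
    define q0 where "q0 = \<gamma> * y ^ (n - m)"
    have q0R: "q0 \<in> Rg" unfolding q0_def using \<gamma>C
      by (intro rc_mult rc_base ring_cl_power) auto
    have hq0: "hasrep C y q0 (\<lambda>i. if i = n - m then \<gamma> else 0) (n - m)"
      using lrep_monom[OF \<gamma>C(1)] \<gamma>C unfolding hasrep_def q0_def by simp
    obtain g where hg: "hasrep C y (b * q0) g (m + (n - m))" "g (m + (n - m)) = e m * \<gamma>"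
      using hasrep_mult[OF he hq0] by auto
    have mn: "m + (n - m) = n" using le dn dm by simp
    have "e m * \<gamma> = c n" unfolding \<gamma>_def using em by (simp add: mult.assoc[symmetric])
    then have "a - b * q0 = 0 \<or> gdeg C y (a - b * q0) < n"
      using sub_same[OF hc, of "b * q0" g] hg mn by simp
    then show ?thesis
    proof
      assume "a - b * q0 = 0"
      then have "a = b * q0 + 0" by simp
      then show ?thesis using q0R ring_cl_zero[of "C \<union> {y}"] by blast
    next
      assume lt: "gdeg C y (a - b * q0) < n"
      have "a - b * q0 \<in> Rg" using less.prems b q0R by (intro ring_cl_diff rc_mult)
      then obtain q1 r where q1: "q1 \<in> Rg" "r \<in> Rg" "a - b * q0 = b * q1 + r"
          "r = 0 \<or> gdeg C y r < gdeg C y b"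
        using less.hyps[of "a - b * q0"] lt dn by blast
      then have "a = b * (q0 + q1) + r" by (simp add: algebra_simps)
      moreover have "q0 + q1 \<in> Rg" using q1 q0R by (rule_tac rc_add) auto
      ultimately show ?thesis using q1 by blast
    qed
  qed
qed

lemma ore:
  assumes "b \<in> Rg" "b' \<in> Rg" "b \<noteq> 0" "b' \<noteq> 0"
  shows "\<exists>x\<in>Rg. \<exists>x'\<in>Rg. x \<noteq> 0 \<and> x' \<noteq> 0 \<and> b * x = b' * x'"
proof -
  have "\<forall>b b'. b \<in> Rg \<and> b' \<in> Rg \<and> b \<noteq> 0 \<and> b' \<noteq> 0 \<and> gdeg C y b + gdeg C y b' = N \<longrightarrow>
          (\<exists>x\<in>Rg. \<exists>x'\<in>Rg. x \<noteq> 0 \<and> x' \<noteq> 0 \<and> b * x = b' * x')" for N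
  proof (induction N rule: less_induct)
    case (less N)
    have main: "\<exists>x\<in>Rg. \<exists>x'\<in>Rg. x \<noteq> 0 \<and> x' \<noteq> 0 \<and> u * x = v * x'"
      if u: "u \<in> Rg" "u \<noteq> 0" and v: "v \<in> Rg" "v \<noteq> 0" and le: "gdeg C y v \<le> gdeg C y u"
        and N: "gdeg C y u + gdeg C y v = N" for u v
    proof -
      obtain q r where qr: "q \<in> Rg" "r \<in> Rg" "u = v * q + r" "r = 0 \<or> gdeg C y r < gdeg C y v"
        using divalg[OF v u(1)] by blast
      show ?thesis
      proof (cases "r = 0")
        case True
        then have "q \<noteq> 0" using qr u by auto
        have "u * 1 = v * q" using True qr by simp
        show ?thesis
        proof (rule bexI[of _ 1])
          show "\<exists>x'\<in>Rg. (1::'a) \<noteq> 0 \<and> x' \<noteq> 0 \<and> u * 1 = v * x'"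
            using \<open>u * 1 = v * q\<close> \<open>q \<noteq> 0\<close> qr(1) by auto
        qed (rule rc_one)
      next
        case False
        then have "gdeg C y v + gdeg C y r < N" using qr le N by auto
        then obtain x x' where xx: "x \<in> Rg" "x' \<in> Rg" "x \<noteq> 0" "x' \<noteq> 0" "v * x = r * x'"
          using less.IH v qr False by blast
        have "u * x' = v * (q * x' + x)" using qr xx by (simp add: algebra_simps)
        moreover have "u * x' \<noteq> 0" using u xx by simp
        ultimately have "q * x' + x \<noteq> 0" by auto
        moreover have "q * x' + x \<in> Rg" using xx qr by (metis rc_add rc_mult)
        ultimately show ?thesis using xx \<open>u * x' = v * (q * x' + x)\<close> by blast
      qed
    qed
    show ?case
    proof (intro allI impI)
      fix b b' assume h: "b \<in> Rg \<and> b' \<in> Rg \<and> b \<noteq> 0 \<and> b' \<noteq> 0 \<and> gdeg C y b + gdeg C y b' = N"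
      show "\<exists>x\<in>Rg. \<exists>x'\<in>Rg. x \<noteq> 0 \<and> x' \<noteq> 0 \<and> b * x = b' * x'"
      proof (cases "gdeg C y b' \<le> gdeg C y b")
        case True then show ?thesis using main h by blast
      next
        case False
        then obtain x x' where "x \<in> Rg" "x' \<in> Rg" "x \<noteq> 0" "x' \<noteq> 0" "b' * x = b * x'"
          using main[of b' b] h by auto
        then show ?thesis by metis
      qed
    qed
  qed
  then show ?thesis using assms by blast
qed

lemma pid:
  assumes "L \<subseteq> Rg" "0 \<in> L" "L \<noteq> {0}" "\<forall>u\<in>L. \<forall>v\<in>L. u + v \<in> L" "\<forall>u\<in>L. \<forall>p\<in>Rg. u * p \<in> L"
  shows "\<exists>g\<in>L. g \<noteq> 0 \<and> L = {g * p | p. p \<in> Rg}"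
proof -
  obtain u0 where "u0 \<in> L" "u0 \<noteq> 0" using assms(2,3) by blast
  then obtain g where g: "g \<in> L \<and> g \<noteq> 0" "\<forall>u. u \<in> L \<and> u \<noteq> 0 \<longrightarrow> gdeg C y g \<le> gdeg C y u"
    using ex_has_least_nat[of "\<lambda>u. u \<in> L \<and> u \<noteq> 0" u0 "gdeg C y"] by blast
  have gR: "g \<in> Rg" using g assms(1) by auto
  have "L \<subseteq> {g * p | p. p \<in> Rg}"
  proof
    fix u assume u: "u \<in> L"
    then obtain q r where qr: "q \<in> Rg" "r \<in> Rg" "u = g * q + r" "r = 0 \<or> gdeg C y r < gdeg C y g"
      using divalg[OF gR] g assms(1) by blast
    have "r = u + g * (- q)" using qr by simp
    then have "r \<in> L" using assms(4,5) u g qr(1) rc_neg by metis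
    then have "r = 0" using qr g by (meson not_le)
    then show "u \<in> {g * p | p. p \<in> Rg}" using qr by auto
  qed
  moreover have "{g * p | p. p \<in> Rg} \<subseteq> L" using assms(5) g by auto
  ultimately show ?thesis using g by blast
qed

end


locale wsetup =
  fixes K :: "'a::division_ring set" and t d :: 'a
  assumes cs: "central_subfield K"
    and ch0: "\<forall>n::nat. n > 0 \<longrightarrow> (of_nat n :: 'a) \<noteq> 0"
    and dt: "d * t - t * d = 1"
begin

lemma K0: "0 \<in> K" and K1: "1 \<in> K" and Kadd: "x \<in> K \<Longrightarrow> y \<in> K \<Longrightarrow> x + y \<in> K"
  and Kmul: "x \<in> K \<Longrightarrow> y \<in> K \<Longrightarrow> x * y \<in> K" and Kneg: "x \<in> K \<Longrightarrow> - x \<in> K"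
  and Kinv: "x \<in> K \<Longrightarrow> inverse x \<in> K" and Kc: "c \<in> K \<Longrightarrow> c * x = x * c"
  using cs unfolding central_subfield_def by auto

abbreviation "F \<equiv> Kfrac_d K d"
abbreviation "P \<equiv> Kpoly_d K d"
abbreviation "R \<equiv> Kfrac_d_t K t d"
abbreviation "W \<equiv> Weyl K t d"
abbreviation "Q \<equiv> Quot1 K t d"

lemma KF: "K \<subseteq> F" and dF: "d \<in> F"
  unfolding Kfrac_d_def by (auto intro: dc_base)

lemma F1: "1 \<in> F" unfolding Kfrac_d_def by (rule dc_one)
lemma Fadd: "x \<in> F \<Longrightarrow> y \<in> F \<Longrightarrow> x + y \<in> F" unfolding Kfrac_d_def by (rule dc_add)
lemma Fmul: "x \<in> F \<Longrightarrow> y \<in> F \<Longrightarrow> x * y \<in> F" unfolding Kfrac_d_def by (rule dc_mult)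
lemma Fneg: "x \<in> F \<Longrightarrow> - x \<in> F" unfolding Kfrac_d_def by (rule dc_neg)
lemma Finv: "x \<in> F \<Longrightarrow> inverse x \<in> F" unfolding Kfrac_d_def by (rule dc_inv)
lemma F0: "0 \<in> F" using KF K0 by auto

lemma P1: "1 \<in> P" unfolding Kpoly_d_def by (rule rc_one)
lemma Padd: "x \<in> P \<Longrightarrow> y \<in> P \<Longrightarrow> x + y \<in> P" unfolding Kpoly_d_def by (rule rc_add)
lemma Pmul: "x \<in> P \<Longrightarrow> y \<in> P \<Longrightarrow> x * y \<in> P" unfolding Kpoly_d_def by (rule rc_mult)
lemma Pneg: "x \<in> P \<Longrightarrow> - x \<in> P" unfolding Kpoly_d_def by (rule rc_neg)
lemma P0: "0 \<in> P" unfolding Kpoly_d_def by (rule ring_cl_zero)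
lemma KP: "K \<subseteq> P" and dP: "d \<in> P"
  unfolding Kpoly_d_def by (auto intro: rc_base)

lemma F_comm: "x \<in> F \<Longrightarrow> y \<in> F \<Longrightarrow> x * y = y * x"
proof -
  have "\<forall>x\<in>K \<union> {d}. \<forall>y\<in>K \<union> {d}. x * y = y * x"
    using Kc by (metis Un_iff singletonD)
  then show "x \<in> F \<Longrightarrow> y \<in> F \<Longrightarrow> x * y = y * x"
    unfolding Kfrac_d_def using comm_div_cl2 by blast
qed

lemma delta_F: "a \<in> F \<Longrightarrow> t * a - a * t \<in> F"
  unfolding Kfrac_d_def
proof (induction a rule: div_cl.induct)
  case (dc_base x)
  then show ?case
  proof
    assume "x \<in> K" then have "t * x - x * t = 0" using Kc by auto
    then show ?thesis using F0 unfolding Kfrac_d_def by simp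
  next
    assume "x \<in> {d}"
    then have "t * x - x * t = - 1" using dt by (simp add: algebra_simps)
    then show ?thesis using Fneg[OF F1] unfolding Kfrac_d_def by simp
  qed
next
  case dc_one then show ?case using F0 unfolding Kfrac_d_def by simp
next
  case (dc_add x y)
  have "t * (x + y) - (x + y) * t = (t * x - x * t) + (t * y - y * t)" by (simp add: algebra_simps)
  then show ?case using dc_add div_cl.dc_add by metis
next
  case (dc_neg x)
  have "t * (- x) - (- x) * t = - (t * x - x * t)" by (simp add: algebra_simps)
  then show ?case using dc_neg div_cl.dc_neg by metis
next
  case (dc_mult x y)
  have "t * (x * y) - (x * y) * t = (t * x - x * t) * y + x * (t * y - y * t)"
    by (simp add: algebra_simps)
  then show ?case using dc_mult div_cl.dc_mult div_cl.dc_add by metis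
next
  case (dc_inv x)
  show ?case
  proof (cases "x = 0")
    case True then show ?thesis using F0 unfolding Kfrac_d_def by simp
  next
    case False
    have i1: "inverse x * (x * t) = t" by (metis False left_inverse mult.assoc mult_1_left)
    have i2: "t * x * inverse x = t" by (metis False right_inverse mult.assoc mult_1_right)
    have "inverse x * (t * x - x * t) * inverse x = inverse x * (t * x * inverse x) - inverse x * (x * t) * inverse x"
      by (simp add: left_diff_distrib right_diff_distrib mult.assoc)
    also have "\<dots> = inverse x * t - t * inverse x" using i1 i2 by simp
    finally have "t * inverse x - inverse x * t = - (inverse x * (t * x - x * t) * inverse x)"
      by simp
    then show ?thesis using dc_inv div_cl.dc_inv div_cl.dc_mult div_cl.dc_neg by metis
  qed
qed

lemma PF: "P \<subseteq> F"
  unfolding Kpoly_d_def Kfrac_d_def using ring_cl_sub_div_cl by blast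

lemma delta_P: "a \<in> P \<Longrightarrow> t * a - a * t \<in> P"
  unfolding Kpoly_d_def
proof (induction a rule: ring_cl.induct)
  case (rc_base x)
  then show ?case
  proof
    assume "x \<in> K" then have "t * x - x * t = 0" using Kc by auto
    then show ?thesis using ring_cl_zero by simp
  next
    assume "x \<in> {d}"
    then have "t * x - x * t = - 1" using dt by (simp add: algebra_simps)
    then show ?thesis using ring_cl.rc_neg[OF ring_cl.rc_one] by simp
  qed
next
  case rc_one then show ?case using ring_cl_zero by simp
next
  case (rc_add x y)
  have "t * (x + y) - (x + y) * t = (t * x - x * t) + (t * y - y * t)" by (simp add: algebra_simps)
  then show ?case using rc_add ring_cl.rc_add by metis
next
  case (rc_neg x)
  have "t * (- x) - (- x) * t = - (t * x - x * t)" by (simp add: algebra_simps)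
  then show ?case using rc_neg ring_cl.rc_neg by metis
next
  case (rc_mult x y)
  have "t * (x * y) - (x * y) * t = (t * x - x * t) * y + x * (t * y - y * t)"
    by (simp add: algebra_simps)
  then show ?case using rc_mult ring_cl.rc_mult ring_cl.rc_add by metis
qed

lemma td: "t * d - d * t = - 1" using dt by (simp add: algebra_simps)

interpretation TF: skewf F t d "- 1"
proof
  show "\<And>a. a \<in> F \<Longrightarrow> a * d = d * a" using F_comm dF by blast
qed (auto simp: F0 F1 Fadd Fneg Fmul Finv delta_F td ch0)

interpretation TP: skew P t d "- 1"
proof
  show "\<And>a. a \<in> P \<Longrightarrow> a * d = d * a" using F_comm dF PF by blast
qed (auto simp: P0 P1 Padd Pneg Pmul delta_P td ch0)

interpretation DK: skewf K d t 1
proof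
  fix a assume "a \<in> K"
  then have "d * a - a * d = 0" using Kc[of a d] by simp
  then show "d * a - a * d \<in> K" using K0 by simp
next
  fix a assume "a \<in> K"
  then show "a * t = t * a" using Kc by blast
qed (auto simp: K0 K1 Kadd Kmul Kneg Kinv dt ch0)

lemma P_Rg: "P = ring_cl (K \<union> {d})" unfolding Kpoly_d_def by (rule refl)
lemma R_Rg: "R = ring_cl (F \<union> {t})" unfolding Kfrac_d_t_def by (rule refl)
lemma deg_eq: "deg_t_poly K t d a = gdeg F t a"
  unfolding deg_t_poly_def gdeg_def by (rule refl)

lemma WR: "W \<subseteq> R"
proof -
  have "K \<union> {t, d} \<subseteq> F \<union> {t}" using KF dF by auto
  then show ?thesis unfolding Weyl_def Kfrac_d_t_def using ring_cl_mono by blast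
qed

lemma PW: "P \<subseteq> W"
proof -
  have "K \<union> {d} \<subseteq> K \<union> {t, d}" by auto
  then show ?thesis unfolding Weyl_def Kpoly_d_def using ring_cl_mono by blast
qed

lemma WQ: "W \<subseteq> Q"
  unfolding Quot1_def by (auto intro: dc_base)

lemma tW: "t \<in> W" unfolding Weyl_def by (auto intro: rc_base)

lemma lc_P:
  assumes "x \<in> W" "hasrep F t x c n" shows "c n \<in> P"
proof -
  obtain c' N where "lrep P t x c' N"
    using TP.ring_cl_lrep[of "K \<union> {t, d}" x] assms(1) KP dP unfolding Weyl_def by blast
  then have l: "lrep F t x c' N" using lrep_C_mono PF by blast
  then have "c' = c" using TF.lrep_unique assms(2) unfolding hasrep_def by blast
  then show ?thesis using \<open>lrep P t x c' N\<close> unfolding lrep_def by auto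
qed

lemma degt:
  assumes a: "a \<in> R" "a \<noteq> 0" and b: "b \<in> R" "b \<noteq> 0" and qb: "q * b = a"
  shows "deg_t K t d q = int (gdeg F t a) - int (gdeg F t b)"
  unfolding deg_t_def
proof (rule the_equality)
  have "q = a * inverse b" using qb b(2) by (metis mult.assoc right_inverse mult_1_right)
  then show "\<exists>a' b'. a' \<in> R \<and> b' \<in> R \<and> b' \<noteq> 0 \<and> q = a' * inverse b' \<and>
      int (gdeg F t a) - int (gdeg F t b) = int (deg_t_poly K t d a') - int (deg_t_poly K t d b')"
    using a b by (auto simp: deg_eq)
next
  fix m assume "\<exists>a' b'. a' \<in> R \<and> b' \<in> R \<and> b' \<noteq> 0 \<and> q = a' * inverse b' \<and>
      m = int (deg_t_poly K t d a') - int (deg_t_poly K t d b')"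
  then obtain a' b' where h: "a' \<in> R" "b' \<in> R" "b' \<noteq> 0" "q = a' * inverse b'"
      "m = int (gdeg F t a') - int (gdeg F t b')" by (auto simp: deg_eq)
  have a'q: "a' = q * b'" using h(3,4) by (simp add: mult.assoc)
  have "q \<noteq> 0" using qb a(2) by auto
  then have a'0: "a' \<noteq> 0" using a'q h(3) by simp
  obtain x x' where xx: "x \<in> R" "x' \<in> R" "x \<noteq> 0" "x' \<noteq> 0" "b * x = b' * x'"
    using TF.ore[of b b'] b h unfolding R_Rg by blast
  have "a * x = a' * x'" using xx qb a'q by (metis mult.assoc)
  then have e1: "gdeg F t a + gdeg F t x = gdeg F t a' + gdeg F t x'"
    using TF.deg_mult a xx h a'0 unfolding R_Rg by metis
  have e2: "gdeg F t b + gdeg F t x = gdeg F t b' + gdeg F t x'"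
    using TF.deg_mult b xx h unfolding R_Rg by metis
  show "m = int (gdeg F t a) - int (gdeg F t b)" using e1 e2 h(5) by linarith
qed


lemma D1: "gdeg F t 1 = 0"
  using TF.gdeg_hasrep[OF TF.hasrep_const[OF TF.C1]] by simp


lemma degt_W: "x \<in> W \<Longrightarrow> x \<noteq> 0 \<Longrightarrow> deg_t K t d x = int (gdeg F t x)"
  using degt[of x 1 x] WR R_Rg rc_one D1 by auto

lemma hasrep_R: "x \<in> R \<Longrightarrow> x \<noteq> 0 \<Longrightarrow> \<exists>c. hasrep F t x c (gdeg F t x)"
  using TF.Rg_hasrep TF.gdeg_hasrep unfolding R_Rg by metis

lemma hasrep_nz: "hasrep F t x c n \<Longrightarrow> x \<noteq> 0"
  using TF.lrep_zero unfolding hasrep_def by metis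

lemma P_closed: "0 \<in> P" "1 \<in> P" "p \<in> P \<Longrightarrow> q \<in> P \<Longrightarrow> p * q \<in> P" "p \<in> P \<Longrightarrow> - p \<in> P"
  "p \<in> P \<Longrightarrow> q \<in> P \<Longrightarrow> p + q \<in> P"
  using P0 P1 Pmul Pneg Padd by auto

lemma W_closed: "0 \<in> W" "1 \<in> W" "p \<in> W \<Longrightarrow> q \<in> W \<Longrightarrow> p * q \<in> W" "p \<in> W \<Longrightarrow> - p \<in> W"
  "p \<in> W \<Longrightarrow> q \<in> W \<Longrightarrow> p + q \<in> W"
  unfolding Weyl_def using ring_cl_zero rc_one rc_mult rc_neg rc_add by auto

lemma part1:
  assumes ri: "right_ideal W I" and nz: "I \<noteq> {0}"
  shows "\<exists>f\<in>I. min_deg_part K t d I = {f * p | p. p \<in> P} \<and>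
            (\<forall>g\<in>I. min_deg_part K t d I = {g * p | p. p \<in> P} \<longrightarrow>
                     (\<exists>c\<in>K. c \<noteq> 0 \<and> g = c * f))"
proof -
  have IW: "I \<subseteq> W" and I0: "0 \<in> I" and Iadd: "\<And>x y. x \<in> I \<Longrightarrow> y \<in> I \<Longrightarrow> x + y \<in> I"
    and Imul: "\<And>x a. x \<in> I \<Longrightarrow> a \<in> W \<Longrightarrow> x * a \<in> I"
    using ri unfolding right_ideal_def by auto
  have IR: "x \<in> I \<Longrightarrow> x \<in> R" for x using IW WR by auto
  obtain x0 where "x0 \<in> I" "x0 \<noteq> 0" using nz I0 by blast
  then obtain x1 where x1: "x1 \<in> I \<and> x1 \<noteq> 0" and x1min: "\<forall>x. x \<in> I \<and> x \<noteq> 0 \<longrightarrow> gdeg F t x1 \<le> gdeg F t x"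
    using ex_has_least_nat[of "\<lambda>x. x \<in> I \<and> x \<noteq> 0" x0 "gdeg F t"] by blast
  define m where "m = gdeg F t x1"
  have mmin: "x \<in> I \<Longrightarrow> x \<noteq> 0 \<Longrightarrow> m \<le> gdeg F t x" for x using x1min m_def by auto
  have MDP: "min_deg_part K t d I = {x \<in> I. x \<noteq> 0 \<and> gdeg F t x = m} \<union> {0}"
  proof -
    have "(\<forall>y\<in>I. y \<noteq> 0 \<longrightarrow> deg_t K t d x \<le> deg_t K t d y) \<longleftrightarrow> gdeg F t x = m"
      if "x \<in> I" "x \<noteq> 0" for x
    proof
      assume "\<forall>y\<in>I. y \<noteq> 0 \<longrightarrow> deg_t K t d x \<le> deg_t K t d y"
      then have "deg_t K t d x \<le> deg_t K t d x1" using x1 by auto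
      moreover have "deg_t K t d x = int (gdeg F t x)" using degt_W that IW by auto
      moreover have "deg_t K t d x1 = int m" using degt_W x1 IW m_def by auto
      ultimately have "gdeg F t x \<le> m" by simp
      then show "gdeg F t x = m" using mmin[OF that] by simp
    next
      assume "gdeg F t x = m"
      then have dx: "deg_t K t d x = int m" using degt_W that IW by auto
      show "\<forall>y\<in>I. y \<noteq> 0 \<longrightarrow> deg_t K t d x \<le> deg_t K t d y"
      proof (intro ballI impI)
        fix y assume "y \<in> I" "y \<noteq> 0"
        then have "deg_t K t d y = int (gdeg F t y)" "m \<le> gdeg F t y"
          using degt_W IW mmin by auto
        then show "deg_t K t d x \<le> deg_t K t d y" using dx by simp
      qed
    qed
    then show ?thesis unfolding min_deg_part_def by blast
  qed
  define L where "L = {l. l = 0 \<or> (\<exists>x c. x \<in> I \<and> x \<noteq> 0 \<and> hasrep F t x c m \<and> c m = l)}"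
  have LP: "L \<subseteq> P" using lc_P IW P_closed unfolding L_def by blast
  have L0: "0 \<in> L" unfolding L_def by simp
  obtain c1 where c1: "hasrep F t x1 c1 m" using hasrep_R[of x1] x1 IR m_def by auto
  have Lnz: "L \<noteq> {0}"
  proof -
    have "c1 m \<in> L" "c1 m \<noteq> 0" using c1 x1 unfolding L_def hasrep_def by auto
    then show ?thesis by auto
  qed
  have Ladd: "\<forall>u\<in>L. \<forall>v\<in>L. u + v \<in> L"
  proof (intro ballI)
    fix u v assume u: "u \<in> L" and v: "v \<in> L"
    show "u + v \<in> L"
    proof (cases "u = 0 \<or> v = 0")
      case True then show ?thesis using u v by auto
    next
      case False
      then obtain x c x' c' where h: "x \<in> I" "hasrep F t x c m" "c m = u" "x' \<in> I" "hasrep F t x' c' m" "c' m = v"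
        using u v unfolding L_def by auto
      from TF.add_same[OF h(2) h(5)]
      show ?thesis
      proof
        assume "c m + c' m = 0 \<and> (x + x' = 0 \<or> gdeg F t (x + x') < m)"
        then show ?thesis using h L0 by auto
      next
        assume hr: "hasrep F t (x + x') (\<lambda>i. c i + c' i) m"
        then have "x + x' \<noteq> 0" using hasrep_nz by blast
        then show ?thesis using hr h Iadd unfolding L_def by auto
      qed
    qed
  qed
  have Lmul: "\<forall>u\<in>L. \<forall>p\<in>ring_cl (K \<union> {d}). u * p \<in> L"
  proof (intro ballI)
    fix u p assume u: "u \<in> L" and p: "p \<in> ring_cl (K \<union> {d})"
    then have pP: "p \<in> P" by (simp add: P_Rg)
    show "u * p \<in> L"
    proof (cases "u = 0 \<or> p = 0")
      case True then show ?thesis using L0 by auto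
    next
      case False
      then obtain x c where h: "x \<in> I" "hasrep F t x c m" "c m = u"
        using u unfolding L_def by auto
      have hp: "hasrep F t p (\<lambda>i. if i = 0 then p else 0) 0"
        using TF.hasrep_const pP PF False by auto
      obtain g where g: "hasrep F t (x * p) g m" "g m = c m * p"
        using TF.hasrep_mult[OF h(2) hp] by auto
      have "x * p \<in> I" using Imul h pP PW by auto
      then show ?thesis using g h hasrep_nz unfolding L_def by blast
    qed
  qed
  obtain g where g: "g \<in> L" "g \<noteq> 0" "L = {g * p | p. p \<in> P}"
    using DK.pid[of L] LP L0 Lnz Ladd Lmul unfolding P_Rg by blast
  then obtain f cf where f: "f \<in> I" "f \<noteq> 0" "hasrep F t f cf m" "cf m = g"
    unfolding L_def by auto
  have fp: "f * p \<in> I \<and> f * p \<noteq> 0 \<and> gdeg F t (f * p) = m \<and>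
            (\<exists>g'. hasrep F t (f * p) g' m \<and> g' m = g * p)" if "p \<in> P" "p \<noteq> 0" for p
  proof -
    have hp: "hasrep F t p (\<lambda>i. if i = 0 then p else 0) 0"
      using TF.hasrep_const that PF by auto
    obtain g' where g': "hasrep F t (f * p) g' m" "g' m = cf m * p"
      using TF.hasrep_mult[OF f(3) hp] by auto
    then show ?thesis using Imul f that PW hasrep_nz TF.gdeg_hasrep by blast
  qed
  have eq: "min_deg_part K t d I = {f * p | p. p \<in> P}"
  proof
    show "min_deg_part K t d I \<subseteq> {f * p | p. p \<in> P}"
    proof
      fix x assume "x \<in> min_deg_part K t d I"
      then consider "x = 0" | "x \<in> I" "x \<noteq> 0" "gdeg F t x = m" using MDP by auto
      then show "x \<in> {f * p | p. p \<in> P}"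
      proof cases
        case 1 then show ?thesis using P_closed by (intro CollectI exI[of _ 0]) auto
      next
        case 2
        obtain c where c: "hasrep F t x c m" using hasrep_R[of x] 2 IR by auto
        then have "c m \<in> L" using 2 unfolding L_def by auto
        then obtain q where q: "q \<in> P" "c m = g * q" using g by auto
        have "q \<noteq> 0" using q c unfolding hasrep_def by auto
        then obtain g' where g': "hasrep F t (f * q) g' m" "g' m = g * q" using fp q by blast
        have "x - f * q = 0 \<or> gdeg F t (x - f * q) < m"
          using TF.sub_same[OF c g'(1)] g' q by simp
        moreover have "x - f * q \<in> I"
        proof -
          have "x - f * q = x + f * (- q)" by simp
          moreover have "- q \<in> W" using Pneg[OF q(1)] PW by auto
          then have "f * (- q) \<in> I" using Imul f(1) by blast
          then have "x + f * (- q) \<in> I" using Iadd 2(1) by blast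
          ultimately show ?thesis by simp
        qed
        ultimately have "x = f * q" using mmin by fastforce
        then show ?thesis using q by auto
      qed
    qed
  next
    show "{f * p | p. p \<in> P} \<subseteq> min_deg_part K t d I"
    proof
      fix x assume "x \<in> {f * p | p. p \<in> P}"
      then obtain p where p: "p \<in> P" "x = f * p" by auto
      show "x \<in> min_deg_part K t d I"
      proof (cases "p = 0")
        case True then show ?thesis using MDP p by auto
      next
        case False then show ?thesis using fp[OF p(1)] p MDP by auto
      qed
    qed
  qed
  have uniq: "\<exists>c\<in>K. c \<noteq> 0 \<and> g' = c * f"
    if g': "g' \<in> I" "min_deg_part K t d I = {g' * p | p. p \<in> P}" for g'
  proof -
    have "f \<in> min_deg_part K t d I" using eq P_closed by (auto intro!: exI[of _ 1])
    then obtain p1 where p1: "p1 \<in> P" "f = g' * p1" using g' by auto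
    have "g' \<in> min_deg_part K t d I" using g' P_closed by (auto intro!: exI[of _ 1])
    then obtain q1 where q1: "q1 \<in> P" "g' = f * q1" using eq by auto
    have "f * (q1 * p1) = f * 1" using p1 q1 by (simp add: mult.assoc)
    then have qp: "q1 * p1 = 1" using f(2) by (metis mult_left_cancel)
    then have "q1 \<in> K" using DK.units_C[of q1 p1] p1 q1 unfolding P_Rg by blast
    moreover have "q1 \<noteq> 0" using qp by auto
    ultimately show ?thesis using q1 Kc by metis
  qed
  show ?thesis using eq uniq f by blast
qed


lemma Q_closed: "u \<in> Q \<Longrightarrow> v \<in> Q \<Longrightarrow> u + v \<in> Q" "u \<in> Q \<Longrightarrow> v \<in> Q \<Longrightarrow> u * v \<in> Q"
  "p \<in> W \<Longrightarrow> p \<in> Q" "1 \<in> Q"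
  unfolding Quot1_def using dc_add dc_mult dc_base dc_one by auto

lemma part2:
  assumes ri: "right_ideal W I" and nz: "I \<noteq> {0}"
  shows "\<exists>e\<in>dual_ideal K t d I.
            min_deg_part K t d (dual_ideal K t d I) = {p * e | p. p \<in> P} \<and>
            (\<forall>g\<in>dual_ideal K t d I.
                min_deg_part K t d (dual_ideal K t d I) = {p * g | p. p \<in> P} \<longrightarrow>
                (\<exists>c\<in>K. c \<noteq> 0 \<and> g = c * e))"
proof -
  have IW: "I \<subseteq> W" and I0: "0 \<in> I"
    using ri unfolding right_ideal_def by auto
  obtain f0 where f0: "f0 \<in> I" "f0 \<noteq> 0" using nz I0 by blast
  have f0R: "f0 \<in> R" using f0 IW WR by auto
  define J where "J = dual_ideal K t d I"
  have J1: "1 \<in> J" unfolding J_def dual_ideal_def using Q_closed IW by auto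
  have JQ: "u \<in> J \<Longrightarrow> u \<in> Q" for u unfolding J_def dual_ideal_def by auto
  have JW: "u \<in> J \<Longrightarrow> u * f0 \<in> W" for u unfolding J_def dual_ideal_def using f0 by auto
  have JR: "u \<in> J \<Longrightarrow> u * f0 \<in> R" for u using JW WR by auto
  have Jadd: "u \<in> J \<Longrightarrow> v \<in> J \<Longrightarrow> u + v \<in> J" for u v
    unfolding J_def dual_ideal_def using Q_closed W_closed by (auto simp: distrib_right)
  have Jmul: "p \<in> P \<Longrightarrow> u \<in> J \<Longrightarrow> p * u \<in> J" for p u
    unfolding J_def dual_ideal_def using Q_closed W_closed PW by (auto simp: mult.assoc)
  have Jnz: "u \<noteq> 0 \<Longrightarrow> u * f0 \<noteq> 0" for u using f0 by simp
  have degJ: "u \<in> J \<Longrightarrow> u \<noteq> 0 \<Longrightarrow> deg_t K t d u = int (gdeg F t (u * f0)) - int (gdeg F t f0)" for u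
    using degt[of "u * f0" f0 u] JR Jnz f0 f0R by auto
  obtain u1 where u1: "u1 \<in> J \<and> u1 \<noteq> 0" and u1min: "\<forall>u. u \<in> J \<and> u \<noteq> 0 \<longrightarrow> gdeg F t (u1 * f0) \<le> gdeg F t (u * f0)"
    using ex_has_least_nat[of "\<lambda>u. u \<in> J \<and> u \<noteq> 0" 1 "\<lambda>u. gdeg F t (u * f0)"] J1 by auto
  define M where "M = gdeg F t (u1 * f0)"
  have Mmin: "u \<in> J \<Longrightarrow> u \<noteq> 0 \<Longrightarrow> M \<le> gdeg F t (u * f0)" for u using u1min M_def by auto
  have MDP: "min_deg_part K t d J = {u \<in> J. u \<noteq> 0 \<and> gdeg F t (u * f0) = M} \<union> {0}"
  proof -
    have "(\<forall>v\<in>J. v \<noteq> 0 \<longrightarrow> deg_t K t d u \<le> deg_t K t d v) \<longleftrightarrow> gdeg F t (u * f0) = M"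
      if "u \<in> J" "u \<noteq> 0" for u
    proof
      assume "\<forall>v\<in>J. v \<noteq> 0 \<longrightarrow> deg_t K t d u \<le> deg_t K t d v"
      then have "deg_t K t d u \<le> deg_t K t d u1" using u1 by auto
      moreover have "deg_t K t d u = int (gdeg F t (u * f0)) - int (gdeg F t f0)" using degJ that by auto
      moreover have "deg_t K t d u1 = int M - int (gdeg F t f0)" using degJ u1 M_def by auto
      ultimately have "gdeg F t (u * f0) \<le> M" by simp
      then show "gdeg F t (u * f0) = M" using Mmin[OF that] by simp
    next
      assume "gdeg F t (u * f0) = M"
      then have du: "deg_t K t d u = int M - int (gdeg F t f0)" using degJ that by auto
      show "\<forall>v\<in>J. v \<noteq> 0 \<longrightarrow> deg_t K t d u \<le> deg_t K t d v"
      proof (intro ballI impI)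
        fix v assume "v \<in> J" "v \<noteq> 0"
        then have "deg_t K t d v = int (gdeg F t (v * f0)) - int (gdeg F t f0)" "M \<le> gdeg F t (v * f0)"
          using degJ Mmin by auto
        then show "deg_t K t d u \<le> deg_t K t d v" using du by simp
      qed
    qed
    then show ?thesis unfolding min_deg_part_def by blast
  qed
  define L where "L = {l. l = 0 \<or> (\<exists>u c. u \<in> J \<and> u \<noteq> 0 \<and> hasrep F t (u * f0) c M \<and> c M = l)}"
  have LP: "L \<subseteq> P" using lc_P JW P_closed unfolding L_def by blast
  have L0: "0 \<in> L" unfolding L_def by simp
  obtain c1 where c1: "hasrep F t (u1 * f0) c1 M" using hasrep_R[of "u1 * f0"] u1 JR Jnz M_def by auto
  have Lnz: "L \<noteq> {0}"
  proof -
    have "c1 M \<in> L" "c1 M \<noteq> 0" using c1 u1 unfolding L_def hasrep_def by auto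
    then show ?thesis by auto
  qed
  have Ladd: "\<forall>u\<in>L. \<forall>v\<in>L. u + v \<in> L"
  proof (intro ballI)
    fix a b assume a: "a \<in> L" and b: "b \<in> L"
    show "a + b \<in> L"
    proof (cases "a = 0 \<or> b = 0")
      case True then show ?thesis using a b by auto
    next
      case False
      then obtain u c u' c' where h: "u \<in> J" "hasrep F t (u * f0) c M" "c M = a"
          "u' \<in> J" "hasrep F t (u' * f0) c' M" "c' M = b"
        using a b unfolding L_def by auto
      from TF.add_same[OF h(2) h(5)]
      show ?thesis
      proof
        assume "c M + c' M = 0 \<and> (u * f0 + u' * f0 = 0 \<or> gdeg F t (u * f0 + u' * f0) < M)"
        then show ?thesis using h L0 by auto
      next
        assume hr: "hasrep F t (u * f0 + u' * f0) (\<lambda>i. c i + c' i) M"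
        then have "(u + u') * f0 \<noteq> 0" using hasrep_nz by (simp add: distrib_right)
        then have "u + u' \<noteq> 0" by auto
        moreover have "hasrep F t ((u + u') * f0) (\<lambda>i. c i + c' i) M"
          using hr by (simp add: distrib_right)
        moreover have "u + u' \<in> J" using Jadd h(1,4) by blast
        ultimately have "(\<lambda>i. c i + c' i) M \<in> L" unfolding L_def by blast
        then show ?thesis using h by simp
      qed
    qed
  qed
  have Lmul: "\<forall>u\<in>L. \<forall>p\<in>ring_cl (K \<union> {d}). u * p \<in> L"
  proof (intro ballI)
    fix a p assume a: "a \<in> L" and p: "p \<in> ring_cl (K \<union> {d})"
    then have pP: "p \<in> P" by (simp add: P_Rg)
    show "a * p \<in> L"
    proof (cases "a = 0 \<or> p = 0")
      case True then show ?thesis using L0 by auto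
    next
      case False
      then obtain u c where h: "u \<in> J" "hasrep F t (u * f0) c M" "c M = a"
        using a unfolding L_def by auto
      have hp: "hasrep F t p (\<lambda>i. if i = 0 then p else 0) 0"
        using TF.hasrep_const pP PF False by auto
      obtain g where g: "hasrep F t (p * (u * f0)) g M" "g M = p * c M"
        using TF.hasrep_mult[OF hp h(2)] by auto
      have "a * p = p * c M" using h pP PF F_comm a LP by (metis subsetD)
      moreover have "p * u \<in> J" using Jmul h pP by auto
      moreover have "p * (u * f0) \<noteq> 0" using hasrep_nz g(1) by blast
      then have "p * u \<noteq> 0" by (metis mult.assoc mult_zero_left)
      moreover have "hasrep F t ((p * u) * f0) g M" using g(1) by (simp add: mult.assoc)
      ultimately have "g M \<in> L" unfolding L_def by blast
      then show ?thesis using g(2) \<open>a * p = p * c M\<close> by simp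
    qed
  qed
  obtain g where g: "g \<in> L" "g \<noteq> 0" "L = {g * p | p. p \<in> P}"
    using DK.pid[of L] LP L0 Lnz Ladd Lmul unfolding P_Rg by blast
  then obtain e ce where e: "e \<in> J" "e \<noteq> 0" "hasrep F t (e * f0) ce M" "ce M = g"
    unfolding L_def by auto
  have gF: "g \<in> F" using g(1) LP PF by blast
  have pe: "p * e \<in> J \<and> p * e \<noteq> 0 \<and> gdeg F t (p * e * f0) = M \<and>
            (\<exists>g'. hasrep F t (p * e * f0) g' M \<and> g' M = p * g)" if "p \<in> P" "p \<noteq> 0" for p
  proof -
    have hp: "hasrep F t p (\<lambda>i. if i = 0 then p else 0) 0"
      using TF.hasrep_const that PF by auto
    obtain g' where g': "hasrep F t (p * (e * f0)) g' M" "g' M = p * ce M"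
      using TF.hasrep_mult[OF hp e(3)] by auto
    then show ?thesis using Jmul e that hasrep_nz TF.gdeg_hasrep by (auto simp: mult.assoc)
  qed
  have eq: "min_deg_part K t d J = {p * e | p. p \<in> P}"
  proof
    show "min_deg_part K t d J \<subseteq> {p * e | p. p \<in> P}"
    proof
      fix u assume "u \<in> min_deg_part K t d J"
      then consider "u = 0" | "u \<in> J" "u \<noteq> 0" "gdeg F t (u * f0) = M" using MDP by auto
      then show "u \<in> {p * e | p. p \<in> P}"
      proof cases
        case 1 then show ?thesis using P_closed by (intro CollectI exI[of _ 0]) auto
      next
        case 2
        obtain c where c: "hasrep F t (u * f0) c M" using hasrep_R[of "u * f0"] 2 JR Jnz by auto
        then have "c M \<in> L" using 2 unfolding L_def by auto
        then obtain q where q: "q \<in> P" "c M = g * q" using g by auto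
        have cq: "c M = q * g" using q gF PF F_comm by auto
        have "q \<noteq> 0" using q c unfolding hasrep_def by auto
        then obtain g' where g': "hasrep F t (q * e * f0) g' M" "g' M = q * g" using pe q by blast
        have "u * f0 - q * e * f0 = 0 \<or> gdeg F t (u * f0 - q * e * f0) < M"
          using TF.sub_same[OF c g'(1)] g' cq by simp
        then have d: "(u - q * e) * f0 = 0 \<or> gdeg F t ((u - q * e) * f0) < M"
          by (simp add: left_diff_distrib)
        moreover have "u - q * e \<in> J"
        proof -
          have "u - q * e = u + (- q) * e" by simp
          moreover have "(- q) * e \<in> J" using Jmul Pneg[OF q(1)] e(1) by blast
          then have "u + (- q) * e \<in> J" using Jadd 2(1) by blast
          ultimately show ?thesis by simp
        qed
        ultimately have "u = q * e" using Mmin Jnz by (metis eq_iff_diff_eq_0 not_le)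
        then show ?thesis using q by auto
      qed
    qed
  next
    show "{p * e | p. p \<in> P} \<subseteq> min_deg_part K t d J"
    proof
      fix u assume "u \<in> {p * e | p. p \<in> P}"
      then obtain p where p: "p \<in> P" "u = p * e" by auto
      show "u \<in> min_deg_part K t d J"
      proof (cases "p = 0")
        case True then show ?thesis using MDP p by auto
      next
        case False then show ?thesis using pe[OF p(1)] p MDP by auto
      qed
    qed
  qed
  have uniq: "\<exists>c\<in>K. c \<noteq> 0 \<and> g' = c * e"
    if g': "g' \<in> J" "min_deg_part K t d J = {p * g' | p. p \<in> P}" for g'
  proof -
    have "e \<in> min_deg_part K t d J" using eq P_closed by (auto intro!: exI[of _ 1])
    then obtain p1 where p1: "p1 \<in> P" "e = p1 * g'" using g' by auto
    have "g' \<in> min_deg_part K t d J" using g' P_closed by (auto intro!: exI[of _ 1])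
    then obtain q1 where q1: "q1 \<in> P" "g' = q1 * e" using eq by auto
    have "(p1 * q1) * e = 1 * e" using p1 q1 by (simp add: mult.assoc)
    then have "p1 * q1 = 1" using e(2) by (metis mult_right_cancel)
    moreover have "p1 * q1 = q1 * p1" using F_comm p1(1) q1(1) PF by blast
    ultimately have qp: "q1 * p1 = 1" by simp
    then have "q1 \<in> K" using DK.units_C[of q1 p1] p1 q1 unfolding P_Rg by blast
    moreover have "q1 \<noteq> 0" using qp by auto
    ultimately show ?thesis using q1 by metis
  qed
  show ?thesis using eq uniq e unfolding J_def by blast
qed

end

theorem corollary2:
  fixes K :: "'a::division_ring set" and t d :: 'a and I :: "'a set"
  assumes "central_subfield K"
    and "\<forall>n::nat. n > 0 \<longrightarrow> (of_nat n :: 'a) \<noteq> 0"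
    and "d * t - t * d = 1"
    and "right_ideal (Weyl K t d) I" and "I \<noteq> {0}"
  shows "(\<exists>f\<in>I. min_deg_part K t d I = {f * p | p. p \<in> Kpoly_d K d} \<and>
            (\<forall>g\<in>I. min_deg_part K t d I = {g * p | p. p \<in> Kpoly_d K d} \<longrightarrow>
                     (\<exists>c\<in>K. c \<noteq> 0 \<and> g = c * f)))
       \<and> (\<exists>e\<in>dual_ideal K t d I.
            min_deg_part K t d (dual_ideal K t d I) = {p * e | p. p \<in> Kpoly_d K d} \<and>
            (\<forall>g\<in>dual_ideal K t d I.
                min_deg_part K t d (dual_ideal K t d I) = {p * g | p. p \<in> Kpoly_d K d} \<longrightarrow>
                (\<exists>c\<in>K. c \<noteq> 0 \<and> g = c * e)))"
proof -
  interpret wsetup K t d using assms(1-3) by unfold_locales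
  show ?thesis using part1[OF assms(4,5)] part2[OF assms(4,5)] by blast
qed

end
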